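(* Let $N\ge1$ be an integer, $c\neq0$ a constant, and $c_{ij}$, $p_i,q_j,\xi_{i0},\eta_{j0}$ ($1\le i,j\le N$) arbitrary real or complex constants with $p_i+q_j\neq0$ and $q_j\neq 0$. Put $\xi_i=p_ix_1+p_i^{-1}x_{-1}+\xi_{i0}$, $\eta_j=q_jx_1+q_j^{-1}x_{-1}+\eta_{j0}$ and $$\tau_{n,m}(x_{-1},x_1)=\det\Big(c_{ij}+\frac{1}{p_i+q_j}\Big(-\frac{p_i}{q_j}\Big)^n\Big(\frac{1-cp_i}{1+cq_j}\Big)^m e^{\xi_i+\eta_j}\Big)_{1\le i,j\le N}.$$ Then for all integers $n,m$, $\big(\tfrac12 D_{x_{-1}}D_{x_1}-1\big)\tau_{n,m}\cdot\tau_{n,m}=-\tau_{n+1,m}\tau_{n-1,m}$, $\big(c^{-1}D_{x_{-1}}-1\big)\tau_{n,m}\cdot\tau_{n,m+1}+\tau_{n+1,m}\tau_{n-1,m+1}=0$, and $\big(cD_{x_1}-1\big)\tau_{n+1,m}\cdot\tau_{n,m+1}+\tau_{n,m}\tau_{n+1,m+1}=0$.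
   Context: Hirota bilinear operators: $D_x^{k}D_y^{l}\,a\cdot b=(\partial_x-\partial_{x'})^{k}(\partial_y-\partial_{y'})^{l}a(x,y)b(x',y')\big|_{x'=x,\,y'=y}$; a constant term "$-1$" acts as $-ab$. *)

theory Defs
  imports "HOL-Analysis.Analysis"
begin

text \<open>Functions of the two real independent variables (x_{-1}, x_1), complex-valued.
  pdm: partial derivative in x_{-1} (first argument), pdp: partial derivative in x_1.\<close>

definition pdm :: "(real \<Rightarrow> real \<Rightarrow> complex) \<Rightarrow> real \<Rightarrow> real \<Rightarrow> complex" where
  "pdm f = (\<lambda>xm xp. vector_derivative (\<lambda>t. f t xp) (at xm))"

definition pdp :: "(real \<Rightarrow> real \<Rightarrow> complex) \<Rightarrow> real \<Rightarrow> real \<Rightarrow> complex" where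
  "pdp f = (\<lambda>xm xp. vector_derivative (\<lambda>t. f xm t) (at xp))"

definition hirota_Dm :: "(real \<Rightarrow> real \<Rightarrow> complex) \<Rightarrow> (real \<Rightarrow> real \<Rightarrow> complex) \<Rightarrow> real \<Rightarrow> real \<Rightarrow> complex" where
  "hirota_Dm a b = (\<lambda>xm xp. pdm a xm xp * b xm xp - a xm xp * pdm b xm xp)"

definition hirota_Dp :: "(real \<Rightarrow> real \<Rightarrow> complex) \<Rightarrow> (real \<Rightarrow> real \<Rightarrow> complex) \<Rightarrow> real \<Rightarrow> real \<Rightarrow> complex" where
  "hirota_Dp a b = (\<lambda>xm xp. pdp a xm xp * b xm xp - a xm xp * pdp b xm xp)"

definition hirota_DmDp :: "(real \<Rightarrow> real \<Rightarrow> complex) \<Rightarrow> (real \<Rightarrow> real \<Rightarrow> complex) \<Rightarrow> real \<Rightarrow> real \<Rightarrow> complex" where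
  "hirota_DmDp a b = (\<lambda>xm xp.
      pdp (pdm a) xm xp * b xm xp - pdm a xm xp * pdp b xm xp
    - pdp a xm xp * pdm b xm xp + a xm xp * pdp (pdm b) xm xp)"

definition tau :: "complex \<Rightarrow> ('n::finite \<Rightarrow> 'n \<Rightarrow> complex) \<Rightarrow> ('n \<Rightarrow> complex) \<Rightarrow> ('n \<Rightarrow> complex)
    \<Rightarrow> ('n \<Rightarrow> complex) \<Rightarrow> ('n \<Rightarrow> complex) \<Rightarrow> int \<Rightarrow> int \<Rightarrow> real \<Rightarrow> real \<Rightarrow> complex" where
  "tau c cc p q xi0 eta0 n m xm xp =
     det (\<chi> i j. cc i j + (1 / (p i + q j)) * (- p i / q j) powi n
            * ((1 - c * p i) / (1 + c * q j)) powi m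
            * exp ((p i * of_real xp + of_real xm / p i + xi0 i)
                 + (q j * of_real xp + of_real xm / q j + eta0 j)))"

end

theory Submission
  imports Defs "HOL-Computational_Algebra.Polynomial"
begin


definition mdet :: "('n::finite \<Rightarrow> 'n \<Rightarrow> complex) \<Rightarrow> complex" where
  "mdet M = det (\<chi> i j. M i j)"

definition rr :: "('n::finite \<Rightarrow> 'n \<Rightarrow> complex) \<Rightarrow> 'n \<Rightarrow> ('n \<Rightarrow> complex) \<Rightarrow> 'n \<Rightarrow> 'n \<Rightarrow> complex" where
  "rr M k v = (\<lambda>i j. if i = k then v j else M i j)"

definition PP :: "('n::finite \<Rightarrow> 'n \<Rightarrow> complex) \<Rightarrow> ('n \<Rightarrow> complex) \<Rightarrow> ('n \<Rightarrow> complex) \<Rightarrow> complex" where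
  "PP M v u = (\<Sum>k\<in>UNIV. u k * mdet (rr M k v))"

lemma mdet_rr_add: "mdet (rr M k (\<lambda>j. a j + b j)) = mdet (rr M k a) + mdet (rr M k b)"
proof -
  have e: "\<And>a. (\<chi> i j. rr M k a i j) = (\<chi> i. if i = k then (\<chi> j. a j) else (\<chi> j. M i j))"
    by (simp add: vec_eq_iff rr_def)
  have e2: "(\<chi> i j. rr M k (\<lambda>j. a j + b j) i j) = (\<chi> i. if i = k then (\<chi> j. a j) + (\<chi> j. b j) else (\<chi> j. M i j))"
    by (simp add: vec_eq_iff rr_def)
  show ?thesis unfolding mdet_def e2 e by (rule det_row_add)
qed

lemma mdet_rr_mul: "mdet (rr M k (\<lambda>j. c * a j)) = c * mdet (rr M k a)"
proof -
  have e: "\<And>a. (\<chi> i j. rr M k a i j) = (\<chi> i. if i = k then (\<chi> j. a j) else (\<chi> j. M i j))"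
    by (simp add: vec_eq_iff rr_def)
  have e2: "(\<chi> i j. rr M k (\<lambda>j. c * a j) i j) = (\<chi> i. if i = k then c *s (\<chi> j. a j) else (\<chi> j. M i j))"
    by (simp add: vec_eq_iff rr_def)
  show ?thesis unfolding mdet_def e2 e by (rule det_row_mul)
qed

lemma mdet_rr_zero: "mdet (rr M k (\<lambda>j. 0)) = 0"
  using mdet_rr_mul[of M k 0 "\<lambda>j. 0"] by simp

lemma mdet_ident_rows: assumes "k \<noteq> l" "\<And>j. M k j = M l j" shows "mdet M = 0"
  unfolding mdet_def
  by (rule det_identical_rows[OF assms(1)]) (simp add: row_def vec_eq_iff assms(2))

lemma rr_rr_same[simp]: "rr (rr M k v) k w = rr M k w"
  by (simp add: rr_def fun_eq_iff)

lemma rr_self[simp]: "rr M k (M k) = M"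
  by (simp add: rr_def fun_eq_iff)

lemma RL_gen:
  assumes "finite S"
  shows "mdet (\<lambda>i j. if i \<in> S then B i j + u i * w j else B i j) = mdet B + (\<Sum>k\<in>S. u k * mdet (rr B k w))"
  using assms
proof (induction S arbitrary: B rule: finite_induct)
  case empty
  then show ?case by simp
next
  case (insert a S)
  define MS where "MS B = (\<lambda>i j. if i \<in> S then B i j + u i * w j else B i j)" for B
  have e1: "(\<lambda>i j. if i \<in> insert a S then B i j + u i * w j else B i j)
      = rr (MS B) a (\<lambda>j. B a j + u a * w j)"
    using insert by (auto simp: rr_def MS_def fun_eq_iff)
  have e2: "rr (MS B) a B' = MS (rr B a B')" for B'
    using insert by (auto simp: rr_def MS_def fun_eq_iff)
  have z: "mdet (rr (rr B a w) k w) = 0" if "k \<in> S" for k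
    using that insert by (intro mdet_ident_rows[of k a]) (auto simp: rr_def)
  have "mdet (\<lambda>i j. if i \<in> insert a S then B i j + u i * w j else B i j)
     = mdet (MS B) + u a * mdet (MS (rr B a w))"
  proof -
    have e3: "rr (MS B) a (\<lambda>j. B a j) = MS B" using insert by (auto simp: rr_def MS_def fun_eq_iff)
    show ?thesis unfolding e1 mdet_rr_add mdet_rr_mul e2[symmetric] e3 ..
  qed
  also have "mdet (MS B) = mdet B + (\<Sum>k\<in>S. u k * mdet (rr B k w))"
    unfolding MS_def by (rule insert.IH)
  also have "mdet (MS (rr B a w)) = mdet (rr B a w)"
    unfolding MS_def insert.IH using z by simp
  finally show ?case using insert by (simp add: algebra_simps)
qed

lemma RL: "mdet (\<lambda>i j. M i j + u i * v j) = mdet M + PP M v u"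
  using RL_gen[of UNIV M u v] by (simp add: PP_def)

lemma PP_addv: "PP M (\<lambda>j. a j + b j) u = PP M a u + PP M b u"
  by (simp add: PP_def mdet_rr_add algebra_simps sum.distrib)
lemma PP_mulv: "PP M (\<lambda>j. c * a j) u = c * PP M a u"
  by (simp add: PP_def mdet_rr_mul algebra_simps sum_distrib_left)
lemma PP_addu: "PP M v (\<lambda>j. a j + b j) = PP M v a + PP M v b"
  by (simp add: PP_def algebra_simps sum.distrib)
lemma PP_mulu: "PP M v (\<lambda>j. c * a j) = c * PP M v a"
  by (simp add: PP_def algebra_simps sum_distrib_left)



lemma mdet_rr_sum:
  assumes "finite S"
  shows "mdet (rr M k (\<lambda>j. \<Sum>i\<in>S. y i * R i j)) = (\<Sum>i\<in>S. y i * mdet (rr M k (R i)))"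
  using assms
proof (induction S rule: finite_induct)
  case empty
  then show ?case using mdet_rr_zero by simp
next
  case (insert a S)
  have "(\<lambda>j. \<Sum>i\<in>insert a S. y i * R i j) = (\<lambda>j. y a * R a j + (\<Sum>i\<in>S. y i * R i j))"
    using insert by simp
  then show ?case using insert by (simp add: mdet_rr_add mdet_rr_mul)
qed

lemma sum_two:
  fixes f :: "'n::finite \<Rightarrow> complex"
  assumes "k \<noteq> l" "\<And>i. i \<noteq> k \<Longrightarrow> i \<noteq> l \<Longrightarrow> f i = 0"
  shows "(\<Sum>i\<in>UNIV. f i) = f k + f l"
proof -
  have "(\<Sum>i\<in>UNIV. f i) = (\<Sum>i\<in>{k,l}. f i)"
    by (rule sum.mono_neutral_right) (auto simp: assms(2))
  then show ?thesis using assms(1) by simp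
qed

lemma sum_one:
  fixes f :: "'n::finite \<Rightarrow> complex"
  assumes "\<And>i. i \<noteq> k \<Longrightarrow> f i = 0"
  shows "(\<Sum>i\<in>UNIV. f i) = f k"
proof -
  have "(\<Sum>i\<in>UNIV. f i) = (\<Sum>i\<in>{k}. f i)"
    by (rule sum.mono_neutral_right) (auto simp: assms)
  then show ?thesis by simp
qed

lemma cramer_row:
  "mdet (rr N k (\<lambda>j. \<Sum>i\<in>UNIV. y i * N i j)) = y k * mdet N"
proof -
  have "mdet (rr N k (\<lambda>j. \<Sum>i\<in>UNIV. y i * N i j)) = (\<Sum>i\<in>UNIV. y i * mdet (rr N k (N i)))"
    by (rule mdet_rr_sum) simp
  also have "\<dots> = y k * mdet (rr N k (N k))"
  proof (rule sum_one)
    fix i assume "i \<noteq> k"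
    then have "mdet (rr N k (N i)) = 0" by (intro mdet_ident_rows[of i k]) (auto simp: rr_def)
    then show "y i * mdet (rr N k (N i)) = 0" by simp
  qed
  finally show ?thesis by simp
qed

lemma mdet_swap:
  assumes "k \<noteq> l"
  shows "mdet (rr (rr N l (N k)) k (N l)) = - mdet N"
proof -
  let ?p = "Transposition.transpose k l"
  have pp: "?p permutes (UNIV::'a set)" by (rule permutes_swap_id) auto
  have e: "(\<chi> i j. rr (rr N l (N k)) k (N l) i j) = (\<chi> i. (\<chi> i j. N i j) $ ?p i)"
    using assms by (auto simp: vec_eq_iff rr_def Transposition.transpose_def)
  show ?thesis unfolding mdet_def e det_permute_rows[OF pp] sign_swap_id using assms by simp
qed

lemma two_rows:
  assumes "k \<noteq> l"
  shows "mdet (rr (rr N k (\<lambda>j. \<Sum>i\<in>UNIV. y i * N i j)) l (\<lambda>j. \<Sum>i\<in>UNIV. z i * N i j))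
     = (y k * z l - y l * z k) * mdet N"
proof -
  let ?Y = "\<lambda>j. \<Sum>i\<in>UNIV. y i * N i j"
  let ?B = "rr N k ?Y"
  have "mdet (rr ?B l (\<lambda>j. \<Sum>i\<in>UNIV. z i * N i j)) = (\<Sum>i\<in>UNIV. z i * mdet (rr ?B l (N i)))"
    by (rule mdet_rr_sum) simp
  also have "\<dots> = z k * mdet (rr ?B l (N k)) + z l * mdet (rr ?B l (N l))"
  proof (rule sum_two[OF assms])
    fix i assume "i \<noteq> k" "i \<noteq> l"
    then have "mdet (rr ?B l (N i)) = 0" by (intro mdet_ident_rows[of i l]) (auto simp: rr_def)
    then show "z i * mdet (rr ?B l (N i)) = 0" by simp
  qed
  also have "rr ?B l (N l) = ?B" using assms by (auto simp: rr_def fun_eq_iff)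
  also have "mdet ?B = y k * mdet N" by (rule cramer_row)
  also have "rr ?B l (N k) = rr (rr N l (N k)) k ?Y" using assms by (auto simp: rr_def fun_eq_iff)
  also have "mdet (rr (rr N l (N k)) k ?Y) = (\<Sum>i\<in>UNIV. y i * mdet (rr (rr N l (N k)) k (N i)))"
    by (rule mdet_rr_sum) simp
  also have "\<dots> = y k * mdet (rr (rr N l (N k)) k (N k)) + y l * mdet (rr (rr N l (N k)) k (N l))"
  proof (rule sum_two[OF assms])
    fix i assume "i \<noteq> k" "i \<noteq> l"
    then have "mdet (rr (rr N l (N k)) k (N i)) = 0" by (intro mdet_ident_rows[of i k]) (auto simp: rr_def)
    then show "y i * mdet (rr (rr N l (N k)) k (N i)) = 0" by simp
  qed
  also have "mdet (rr (rr N l (N k)) k (N k)) = 0"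
    using assms by (intro mdet_ident_rows[of k l]) (auto simp: rr_def)
  also have "mdet (rr (rr N l (N k)) k (N l)) = - mdet N" by (rule mdet_swap[OF assms])
  finally show ?thesis by (simp add: algebra_simps)
qed

lemma PP_span:
  "PP N (\<lambda>j. \<Sum>i\<in>UNIV. y i * N i j) u = (\<Sum>k\<in>UNIV. u k * y k) * mdet N"
  unfolding PP_def cramer_row by (simp add: sum_distrib_left algebra_simps)

lemma det2_span:
  fixes N :: "'n::finite \<Rightarrow> 'n \<Rightarrow> complex" and y1 y2 :: "'n \<Rightarrow> complex"
  defines "v1 \<equiv> (\<lambda>j. \<Sum>i\<in>UNIV. y1 i * N i j)" and "v2 \<equiv> (\<lambda>j. \<Sum>i\<in>UNIV. y2 i * N i j)"
  shows "mdet (\<lambda>i j. N i j + u1 i * v1 j + u2 i * v2 j)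
    = mdet N * ((1 + (\<Sum>k\<in>UNIV. u1 k * y1 k)) * (1 + (\<Sum>k\<in>UNIV. u2 k * y2 k))
        - (\<Sum>k\<in>UNIV. u2 k * y1 k) * (\<Sum>k\<in>UNIV. u1 k * y2 k))"
proof -
  let ?D = "mdet N"
  define B where "B = (\<lambda>i j. N i j + u1 i * v1 j)"
  have "mdet (\<lambda>i j. N i j + u1 i * v1 j + u2 i * v2 j) = mdet (\<lambda>i j. B i j + u2 i * v2 j)"
    by (simp add: B_def)
  also have "\<dots> = mdet B + PP B v2 u2" by (rule RL)
  also have "mdet B = ?D + (\<Sum>k\<in>UNIV. u1 k * y1 k) * ?D"
    unfolding B_def RL v1_def PP_span ..
  also have "PP B v2 u2 = (\<Sum>k\<in>UNIV. u2 k * (y2 k * ?D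
       + (\<Sum>l\<in>UNIV. u1 l * ((y2 k * y1 l - y2 l * y1 k) * ?D))))"
    unfolding PP_def
  proof (rule sum.cong[OF refl])
    fix k
    define ut where "ut = (\<lambda>i. if i = k then 0 else u1 i)"
    have e: "rr B k v2 = (\<lambda>i j. rr N k v2 i j + ut i * v1 j)"
      by (auto simp: B_def rr_def ut_def fun_eq_iff)
    have "mdet (rr B k v2) = mdet (rr N k v2) + PP (rr N k v2) v1 ut"
      unfolding e by (rule RL)
    also have "mdet (rr N k v2) = y2 k * ?D" unfolding v2_def by (rule cramer_row)
    also have "PP (rr N k v2) v1 ut = (\<Sum>l\<in>UNIV. u1 l * ((y2 k * y1 l - y2 l * y1 k) * ?D))"
      unfolding PP_def
    proof (rule sum.cong[OF refl])
      fix l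
      show "ut l * mdet (rr (rr N k v2) l v1) = u1 l * ((y2 k * y1 l - y2 l * y1 k) * ?D)"
      proof (cases "l = k")
        case True then show ?thesis by (simp add: ut_def)
      next
        case False
        then show ?thesis unfolding v1_def v2_def two_rows[OF False[symmetric]]
          by (simp add: ut_def)
      qed
    qed
    finally show "u2 k * mdet (rr B k v2) = u2 k * (y2 k * ?D
       + (\<Sum>l\<in>UNIV. u1 l * ((y2 k * y1 l - y2 l * y1 k) * ?D)))" by simp
  qed
  also have "\<dots> = ?D * ((\<Sum>k\<in>UNIV. u2 k * y2 k) + (\<Sum>k\<in>UNIV. u2 k * y2 k) * (\<Sum>k\<in>UNIV. u1 k * y1 k)
        - (\<Sum>k\<in>UNIV. u2 k * y1 k) * (\<Sum>k\<in>UNIV. u1 k * y2 k))" (is "_ = ?D * (?S22 + ?S22 * ?S11 - ?S21 * ?S12)")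
  proof -
    have inner: "(\<Sum>l\<in>UNIV. u1 l * ((y2 k * y1 l - y2 l * y1 k) * ?D)) = ?D * (y2 k * ?S11 - y1 k * ?S12)" for k
    proof -
      have "(\<Sum>l\<in>UNIV. u1 l * ((y2 k * y1 l - y2 l * y1 k) * ?D))
          = (\<Sum>l\<in>UNIV. (?D * y2 k) * (u1 l * y1 l) - (?D * y1 k) * (u1 l * y2 l))"
        by (rule sum.cong) (auto simp: algebra_simps)
      also have "\<dots> = (?D * y2 k) * ?S11 - (?D * y1 k) * ?S12"
        by (simp only: sum_subtractf sum_distrib_left)
      finally show ?thesis by (simp add: algebra_simps)
    qed
    have "(\<Sum>k\<in>UNIV. u2 k * (y2 k * ?D + (\<Sum>l\<in>UNIV. u1 l * ((y2 k * y1 l - y2 l * y1 k) * ?D))))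
       = (\<Sum>k\<in>UNIV. ?D * (u2 k * y2 k) + (?D * ?S11) * (u2 k * y2 k) - (?D * ?S12) * (u2 k * y1 k))"
      unfolding inner by (rule sum.cong) (auto simp: algebra_simps)
    also have "\<dots> = ?D * ?S22 + (?D * ?S11) * ?S22 - (?D * ?S12) * ?S21"
      by (simp only: sum_subtractf sum.distrib sum_distrib_left)
    finally show ?thesis by (simp add: algebra_simps)
  qed
  finally show ?thesis by (simp add: algebra_simps)
qed

lemma span_exists:
  fixes N :: "'n::finite \<Rightarrow> 'n \<Rightarrow> complex"
  assumes "mdet N \<noteq> 0"
  shows "\<exists>y. v = (\<lambda>j. \<Sum>i\<in>UNIV. y i * N i j)"
proof -
  let ?A = "(\<chi> i j. N i j)"
  have "invertible ?A" using assms invertible_det_nz[of ?A] by (simp add: mdet_def)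
  then obtain B where B: "B ** ?A = mat 1" unfolding invertible_def by blast
  have Bc: "(\<Sum>i\<in>UNIV. B$j$i * N i l) = (if j = l then 1 else 0)" for j l
  proof -
    have "(B ** ?A)$j$l = (mat 1 :: complex^'n^'n)$j$l" using B by simp
    then show ?thesis by (simp add: matrix_matrix_mult_def mat_def)
  qed
  define y where "y i = (\<Sum>j\<in>UNIV. v j * B$j$i)" for i
  have "(\<Sum>i\<in>UNIV. y i * N i l) = v l" for l
  proof -
    have "(\<Sum>i\<in>UNIV. y i * N i l) = (\<Sum>j\<in>UNIV. v j * (\<Sum>i\<in>UNIV. B$j$i * N i l))"
    proof -
      have "(\<Sum>i\<in>UNIV. y i * N i l) = (\<Sum>i\<in>UNIV. \<Sum>j\<in>UNIV. v j * (B$j$i * N i l))"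
        unfolding y_def by (simp add: sum_distrib_right mult.assoc)
      also have "\<dots> = (\<Sum>j\<in>UNIV. \<Sum>i\<in>UNIV. v j * (B$j$i * N i l))" by (rule sum.swap)
      also have "\<dots> = (\<Sum>j\<in>UNIV. v j * (\<Sum>i\<in>UNIV. B$j$i * N i l))" by (simp add: sum_distrib_left)
      finally show ?thesis .
    qed
    also have "\<dots> = v l" unfolding Bc by (simp add: if_distrib cong: if_cong)
    finally show ?thesis .
  qed
  then show ?thesis by (intro exI[of _ y]) auto
qed

lemma J_inv:
  fixes N :: "'n::finite \<Rightarrow> 'n \<Rightarrow> complex"
  assumes "mdet N \<noteq> 0"
  shows "mdet N * mdet (\<lambda>i j. N i j + u1 i * v1 j + u2 i * v2 j)
    = (mdet N + PP N v1 u1) * (mdet N + PP N v2 u2) - PP N v2 u1 * PP N v1 u2"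
proof -
  obtain y1 where y1: "v1 = (\<lambda>j. \<Sum>i\<in>UNIV. y1 i * N i j)" using span_exists[OF assms] by blast
  obtain y2 where y2: "v2 = (\<lambda>j. \<Sum>i\<in>UNIV. y2 i * N i j)" using span_exists[OF assms] by blast
  show ?thesis unfolding y1 y2 det2_span PP_span by (simp add: algebra_simps)
qed



lemma cont_mdet:
  assumes "\<And>i j. continuous F (\<lambda>t. G t i j)"
  shows "continuous F (\<lambda>t. mdet (G t))"
  unfolding mdet_def det_def by (simp, intro continuous_intros assms)

lemma cont_PP:
  assumes "\<And>i j. continuous F (\<lambda>t. G t i j)"
  shows "continuous F (\<lambda>t. PP (G t) v u)"
proof -
  have h: "continuous F (\<lambda>x. if i = k then v j else G x i j)" for i k j
    by (cases "i = k") (simp_all add: assms)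
  show ?thesis unfolding PP_def rr_def by (intro continuous_intros cont_mdet h)
qed

lemma dens:
  fixes E :: "complex \<Rightarrow> complex"
  assumes "continuous (at 0) E" "finite Z" "\<And>t. t \<notin> Z \<Longrightarrow> E t = 0"
  shows "E 0 = 0"
proof -
  have "open (- (Z - {0}))" using assms(2) by (intro open_Compl finite_imp_closed) auto
  then have ev: "eventually (\<lambda>t. t \<notin> Z) (at (0::complex))"
    unfolding eventually_at_topological by (intro exI[of _ "- (Z - {0})"]) auto
  have "(E \<longlongrightarrow> 0) (at 0)"
    by (rule tendsto_eventually) (rule eventually_mono[OF ev], simp add: assms(3))
  moreover have "(E \<longlongrightarrow> E 0) (at 0)" using assms(1) by (simp add: continuous_at)
  ultimately show ?thesis by (metis tendsto_unique at_neq_bot)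
qed

lemma shift_poly:
  fixes N :: "'n::finite \<Rightarrow> 'n \<Rightarrow> complex"
  shows "finite {t. mdet (\<lambda>i j. N i j + (if i = j then t else 0)) = 0}"
proof -
  let ?S = "{p. p permutes (UNIV::'n set)}"
  define Q where "Q \<sigma> = (\<Prod>i\<in>UNIV. [: N i (\<sigma> i), if \<sigma> i = i then 1 else 0 :])" for \<sigma> :: "'n \<Rightarrow> 'n"
  define P where "P = (\<Sum>\<sigma>\<in>?S. smult (of_int (sign \<sigma>)) (Q \<sigma>))"
  have pv: "poly P t = mdet (\<lambda>i j. N i j + (if i = j then t else 0))" for t
    unfolding P_def Q_def mdet_def det_def poly_sum poly_smult poly_prod
    by (intro sum.cong refl arg_cong2[where f="(*)"] prod.cong) auto
  let ?n = "CARD('n)"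
  have cid: "coeff (Q id) ?n = 1"
  proof -
    have nz: "\<forall>i\<in>UNIV. [: N i i, 1 :] \<noteq> 0" by simp
    have "degree (Q id) = ?n"
      unfolding Q_def id_def by (simp add: degree_prod_eq_sum_degree)
    moreover have "lead_coeff (Q id) = 1"
      unfolding Q_def id_def lead_coeff_prod by simp
    ultimately show ?thesis by simp
  qed
  have cother: "coeff (Q \<sigma>) ?n = 0" if "\<sigma> \<noteq> id" for \<sigma>
  proof -
    obtain i0 where i0: "\<sigma> i0 \<noteq> i0" using \<open>\<sigma> \<noteq> id\<close> by (auto simp: fun_eq_iff)
    have "degree (Q \<sigma>) \<le> sum (degree \<circ> (\<lambda>i. [: N i (\<sigma> i), if \<sigma> i = i then 1 else 0 :])) UNIV"
      unfolding Q_def by (rule degree_prod_sum_le) simp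
    also have "\<dots> \<le> (\<Sum>i\<in>UNIV. (if i = i0 then 0 else 1))"
      by (intro sum_mono) (auto simp: i0)
    also have "\<dots> < ?n"
    proof -
      have "(\<Sum>i\<in>UNIV. (if i = i0 then 0 else 1::nat)) = card (UNIV - {i0})"
        by (simp add: sum.If_cases Compl_eq_Diff_UNIV)
      also have "\<dots> < ?n" by (simp add: card_Diff_subset)
      finally show ?thesis .
    qed
    finally show ?thesis by (simp add: coeff_eq_0)
  qed
  have "coeff P ?n = (\<Sum>\<sigma>\<in>?S. of_int (sign \<sigma>) * coeff (Q \<sigma>) ?n)"
    unfolding P_def coeff_sum by simp
  also have "\<dots> = of_int (sign (id::'n\<Rightarrow>'n)) * coeff (Q id) ?n"
  proof -
    have "id \<in> ?S" by (simp add: permutes_id)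
    have "(\<Sum>\<sigma>\<in>?S. of_int (sign \<sigma>) * coeff (Q \<sigma>) ?n)
       = of_int (sign (id::'n\<Rightarrow>'n)) * coeff (Q id) ?n + (\<Sum>\<sigma>\<in>?S - {id}. of_int (sign \<sigma>) * coeff (Q \<sigma>) ?n)"
      by (rule sum.remove[OF finite_permutations[OF finite]]) (simp add: permutes_id)
    also have "(\<Sum>\<sigma>\<in>?S - {id}. of_int (sign \<sigma>) * coeff (Q \<sigma>) ?n) = (0::complex)"
      by (intro sum.neutral) (auto simp: cother)
    finally show ?thesis by (simp only: add_0_right)
  qed
  also have "\<dots> = 1" by (simp add: cid sign_id)
  finally have "P \<noteq> 0" by auto
  then have "finite {t. poly P t = 0}" by (rule poly_roots_finite)
  then show ?thesis by (simp add: pv)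
qed

lemma J:
  fixes M :: "'n::finite \<Rightarrow> 'n \<Rightarrow> complex"
  shows "mdet M * mdet (\<lambda>i j. M i j + u1 i * v1 j + u2 i * v2 j)
    = (mdet M + PP M v1 u1) * (mdet M + PP M v2 u2) - PP M v2 u1 * PP M v1 u2"
proof -
  define Ms where "Ms t = (\<lambda>i j. M i j + (if i = j then t else 0))" for t
  define E where "E t = mdet (Ms t) * mdet (\<lambda>i j. Ms t i j + u1 i * v1 j + u2 i * v2 j)
    - ((mdet (Ms t) + PP (Ms t) v1 u1) * (mdet (Ms t) + PP (Ms t) v2 u2) - PP (Ms t) v2 u1 * PP (Ms t) v1 u2)" for t
  have cM: "continuous (at 0) (\<lambda>t. Ms t i j)" for i j unfolding Ms_def
    by (cases "i = j") (simp_all add: continuous_intros)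
  have "continuous (at 0) E" unfolding E_def
    by (intro continuous_intros cont_mdet cont_PP cM)
  moreover have "finite {t. mdet (Ms t) = 0}" unfolding Ms_def by (rule shift_poly)
  moreover have "E t = 0" if "t \<notin> {t. mdet (Ms t) = 0}" for t
    using that J_inv[of "Ms t" u1 v1 u2 v2] by (simp add: E_def)
  ultimately have "E 0 = 0" by (rule dens)
  moreover have "Ms 0 = M" by (simp add: Ms_def)
  ultimately show ?thesis by (simp add: E_def)
qed



lemma prod_vderiv:
  fixes f :: "'i \<Rightarrow> real \<Rightarrow> complex"
  assumes "finite I" "\<And>i. i \<in> I \<Longrightarrow> (f i has_vector_derivative f' i) (at x)"
  shows "((\<lambda>t. \<Prod>i\<in>I. f i t) has_vector_derivative (\<Sum>i\<in>I. f' i * (\<Prod>j\<in>I - {i}. f j x))) (at x)"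
proof -
  have "((\<lambda>t. \<Prod>i\<in>I. f i t) has_derivative (\<lambda>y. \<Sum>i\<in>I. (y *\<^sub>R f' i) * (\<Prod>j\<in>I - {i}. f j x))) (at x)"
    using assms(2) by (intro has_derivative_prod) (auto simp: has_vector_derivative_def)
  moreover have "(\<lambda>y. \<Sum>i\<in>I. (y *\<^sub>R f' i) * (\<Prod>j\<in>I - {i}. f j x))
      = (\<lambda>y. y *\<^sub>R (\<Sum>i\<in>I. f' i * (\<Prod>j\<in>I - {i}. f j x)))"
    by (simp add: fun_eq_iff scaleR_sum_right)
  ultimately show ?thesis by (simp add: has_vector_derivative_def)
qed

lemma mdet_deriv:
  fixes F :: "real \<Rightarrow> 'n::finite \<Rightarrow> 'n \<Rightarrow> complex"
  assumes "\<And>i j. ((\<lambda>t. F t i j) has_vector_derivative F' i j) (at x)"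
  shows "((\<lambda>t. mdet (F t)) has_vector_derivative (\<Sum>k\<in>UNIV. mdet (rr (F x) k (F' k)))) (at x)"
proof -
  let ?S = "{p. p permutes (UNIV::'n set)}"
  have md: "mdet G = (\<Sum>\<sigma>\<in>?S. of_int (sign \<sigma>) * (\<Prod>i\<in>UNIV. G i (\<sigma> i)))" for G :: "'n \<Rightarrow> 'n \<Rightarrow> complex"
    unfolding mdet_def det_def by simp
  have "((\<lambda>t. \<Sum>\<sigma>\<in>?S. of_int (sign \<sigma>) * (\<Prod>i\<in>UNIV. F t i (\<sigma> i))) has_vector_derivative
     (\<Sum>\<sigma>\<in>?S. of_int (sign \<sigma>) * (\<Sum>i\<in>UNIV. F' i (\<sigma> i) * (\<Prod>j\<in>UNIV - {i}. F x j (\<sigma> j))))) (at x)"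
    by (intro has_vector_derivative_sum has_vector_derivative_mult_right prod_vderiv assms) auto
  moreover have "(\<Sum>\<sigma>\<in>?S. of_int (sign \<sigma>) * (\<Sum>i\<in>UNIV. F' i (\<sigma> i) * (\<Prod>j\<in>UNIV - {i}. F x j (\<sigma> j))))
      = (\<Sum>k\<in>UNIV. mdet (rr (F x) k (F' k)))"
  proof -
    have r: "mdet (rr (F x) k (F' k)) = (\<Sum>\<sigma>\<in>?S. of_int (sign \<sigma>) * (F' k (\<sigma> k) * (\<Prod>j\<in>UNIV - {k}. F x j (\<sigma> j))))" for k
      unfolding md
    proof (rule sum.cong[OF refl])
      fix \<sigma>
      have "(\<Prod>i\<in>UNIV. rr (F x) k (F' k) i (\<sigma> i)) = rr (F x) k (F' k) k (\<sigma> k) * (\<Prod>i\<in>UNIV - {k}. rr (F x) k (F' k) i (\<sigma> i))"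
        by (rule prod.remove) auto
      also have "(\<Prod>i\<in>UNIV - {k}. rr (F x) k (F' k) i (\<sigma> i)) = (\<Prod>j\<in>UNIV - {k}. F x j (\<sigma> j))"
        by (rule prod.cong) (auto simp: rr_def)
      finally show "of_int (sign \<sigma>) * (\<Prod>i\<in>UNIV. rr (F x) k (F' k) i (\<sigma> i)) =
         of_int (sign \<sigma>) * (F' k (\<sigma> k) * (\<Prod>j\<in>UNIV - {k}. F x j (\<sigma> j)))"
        by (simp add: rr_def)
    qed
    show ?thesis unfolding r sum_distrib_left
      by (rule sum.swap)
  qed
  ultimately show ?thesis unfolding md by simp
qed

lemma dsum_outer:
  "(\<Sum>k\<in>UNIV. mdet (rr M k (\<lambda>j. u k * v j))) = PP M v u"
  unfolding PP_def mdet_rr_mul ..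

lemma dsum_add:
  "(\<Sum>k\<in>UNIV. mdet (rr M k (\<lambda>j. a k j + b k j))) = (\<Sum>k\<in>UNIV. mdet (rr M k (a k))) + (\<Sum>k\<in>UNIV. mdet (rr M k (b k)))"
  unfolding mdet_rr_add sum.distrib ..

lemma mdet_deriv1:
  fixes F :: "real \<Rightarrow> 'n::finite \<Rightarrow> 'n \<Rightarrow> complex"
  assumes "\<And>i j. ((\<lambda>t. F t i j) has_vector_derivative u i * v j) (at x)"
  shows "((\<lambda>t. mdet (F t)) has_vector_derivative PP (F x) v u) (at x)"
  using mdet_deriv[of F "\<lambda>i j. u i * v j", OF assms] unfolding dsum_outer .

lemma mdet_deriv3:
  fixes F :: "real \<Rightarrow> 'n::finite \<Rightarrow> 'n \<Rightarrow> complex"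
  assumes "\<And>i j. ((\<lambda>t. F t i j) has_vector_derivative u1 i * v1 j + u2 i * v2 j + u3 i * v3 j) (at x)"
  shows "((\<lambda>t. mdet (F t)) has_vector_derivative PP (F x) v1 u1 + PP (F x) v2 u2 + PP (F x) v3 u3) (at x)"
  using mdet_deriv[of F "\<lambda>i j. u1 i * v1 j + u2 i * v2 j + u3 i * v3 j", OF assms]
  unfolding dsum_add dsum_outer .



definition phi :: "complex \<Rightarrow> ('n \<Rightarrow> complex) \<Rightarrow> ('n \<Rightarrow> complex) \<Rightarrow> int \<Rightarrow> int \<Rightarrow> real \<Rightarrow> real \<Rightarrow> 'n \<Rightarrow> complex" where
  "phi c p xi0 n m xm xp i = (- p i) powi n * (1 - c * p i) powi m * exp (p i * of_real xp + of_real xm / p i + xi0 i)"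

definition psi :: "complex \<Rightarrow> ('n \<Rightarrow> complex) \<Rightarrow> ('n \<Rightarrow> complex) \<Rightarrow> int \<Rightarrow> int \<Rightarrow> real \<Rightarrow> real \<Rightarrow> 'n \<Rightarrow> complex" where
  "psi c q eta0 n m xm xp j = exp (q j * of_real xp + of_real xm / q j + eta0 j) / (q j powi n * (1 + c * q j) powi m)"

definition Mt :: "complex \<Rightarrow> ('n::finite \<Rightarrow> 'n \<Rightarrow> complex) \<Rightarrow> ('n \<Rightarrow> complex) \<Rightarrow> ('n \<Rightarrow> complex)
    \<Rightarrow> ('n \<Rightarrow> complex) \<Rightarrow> ('n \<Rightarrow> complex) \<Rightarrow> int \<Rightarrow> int \<Rightarrow> real \<Rightarrow> real \<Rightarrow> 'n \<Rightarrow> 'n \<Rightarrow> complex" where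
  "Mt c cc p q xi0 eta0 n m xm xp = (\<lambda>i j. cc i j + phi c p xi0 n m xm xp i * psi c q eta0 n m xm xp j / (p i + q j))"

lemma vd_exp: "((\<lambda>t::real. exp (A + complex_of_real t * B)) has_vector_derivative B * exp (A + of_real x * B)) (at x)"
proof -
  have "((\<lambda>z. exp (A + z * B)) has_field_derivative exp (A + of_real x * B) * B) (at (of_real x))"
    by (auto intro!: derivative_eq_intros)
  from has_vector_derivative_real_field[OF this] show ?thesis by (simp add: mult.commute)
qed

lemma aux_d: "(p::complex) + q \<noteq> 0 \<Longrightarrow> 0 + (A * (q * B) + p * A * B) / (p + q) = A * B"
proof -
  assume h: "p + q \<noteq> 0"
  have "A * (q * B) + p * A * B = (p + q) * (A * B)" by (simp add: algebra_simps)
  then show ?thesis using h by simp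
qed

lemma e_n1: fixes p q A B X :: complex assumes "p+q \<noteq> 0" "B = q*X"
  shows "(-p*A)*X/(p+q) = A*B/(p+q) + A*(-X)"
  using assms by (simp add: field_simps)
lemma e_nm1: fixes p q A B Y :: complex assumes "p+q \<noteq> 0" "A = p*Y"
  shows "(-Y)*(q*B)/(p+q) = A*B/(p+q) + (-Y)*B"
  using assms by (simp add: field_simps)
lemma e_dm: fixes p q A B :: complex assumes "p+q \<noteq> 0" "p \<noteq> 0" "q \<noteq> 0"
  shows "0 + (A*(B/q) + A/p*B)/(p+q) = A/p*(B/q)"
proof -
  have "A*(B/q) + A/p*B = (p+q)*(A/p*(B/q))" using assms by (simp add: field_simps)
  then show ?thesis using assms by simp
qed
lemma e_m1: fixes p q A X c :: complex assumes "p+q \<noteq> 0" "B = (1+c*q)*X"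
  shows "((1 - c*p)*A)*X/(p+q) = A*B/(p+q) + A*(-(c*X))"
  using assms by (simp add: field_simps)
lemma e_nm1m1: fixes p q A X c :: complex assumes "p+q \<noteq> 0" "p \<noteq> 0" "B = (1+c*q)*X"
  shows "(-((1-c*p)*A/p))*(q*X)/(p+q) = A*B/(p+q) + (-(A/p))*X"
  using assms by (simp add: field_simps) (metis minus_diff_eq minus_divide_left)
lemma e_n1m1: fixes p q A X c :: complex assumes "p+q \<noteq> 0" "q \<noteq> 0" "B = (1+c*q)*X"
  shows "(-p*((1-c*p)*A))*(X/q)/(p+q) = A*B/(p+q) + (-A)*(c*X) + (-((1-c*p)*A))*(X/q)"
  using assms by (simp add: field_simps)

lemma PP_negv: "PP M (\<lambda>j. - v j) u = - PP M v u"
  using PP_mulv[of M "-1" v u] by simp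
lemma PP_negu: "PP M v (\<lambda>i. - u i) = - PP M v u"
  using PP_mulu[of M v "-1" u] by simp

lemma JPP: "mdet M * PP (\<lambda>i j. M i j + u1 i * v1 j) v u
   = (mdet M + PP M v1 u1) * PP M v u - PP M v u1 * PP M v1 u"
proof -
  have a: "PP (\<lambda>i j. M i j + u1 i * v1 j) v u = mdet (\<lambda>i j. M i j + u1 i * v1 j + u i * v j) - mdet (\<lambda>i j. M i j + u1 i * v1 j)"
    using RL[of "\<lambda>i j. M i j + u1 i * v1 j" u v] by simp
  have b: "mdet (\<lambda>i j. M i j + u1 i * v1 j) = mdet M + PP M v1 u1" by (rule RL)
  have j: "mdet M * mdet (\<lambda>i j. M i j + u1 i * v1 j + u i * v j) = (mdet M + PP M v1 u1) * (mdet M + PP M v u) - PP M v u1 * PP M v1 u"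
    by (rule J)
  have "mdet M * PP (\<lambda>i j. M i j + u1 i * v1 j) v u
     = mdet M * mdet (\<lambda>i j. M i j + u1 i * v1 j + u i * v j) - mdet M * mdet (\<lambda>i j. M i j + u1 i * v1 j)"
    unfolding a by (rule right_diff_distrib)
  also have "\<dots> = (mdet M + PP M v1 u1) * (mdet M + PP M v u) - PP M v u1 * PP M v1 u - mdet M * (mdet M + PP M v1 u1)"
    unfolding j b ..
  also have "\<dots> = (mdet M + PP M v1 u1) * PP M v u - PP M v u1 * PP M v1 u"
    by (simp add: algebra_simps)
  finally show ?thesis .
qed

lemma PP_same: "PP (\<lambda>i j. M i j + a i * (k * v j)) v u = PP M v u"
proof -
  have a: "PP (\<lambda>i j. M i j + a i * (k * v j)) v u = mdet (\<lambda>i j. M i j + a i * (k * v j) + u i * v j) - mdet (\<lambda>i j. M i j + a i * (k * v j))"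
    using RL[of "\<lambda>i j. M i j + a i * (k * v j)" u v] by simp
  have b: "(\<lambda>i j. M i j + a i * (k * v j) + u i * v j) = (\<lambda>i j. M i j + (k * a i + u i) * v j)"
    by (simp add: fun_eq_iff algebra_simps)
  have b2: "(\<lambda>i j. M i j + a i * (k * v j)) = (\<lambda>i j. M i j + (k * a i) * v j)"
    by (simp add: fun_eq_iff algebra_simps)
  show ?thesis by (subst a, unfold b b2 RL PP_addu, simp)
qed

lemma alg1: fixes T D pm pp ppm Tn1 Tnm1 X Y Z W :: complex
  assumes "T = D" "pm = Y" "pp = X" "Tn1 = D - W" "Tnm1 = D - Z"
    "T * ppm = (D+Y)*X - Z*W + ((D+Y)*W - Y*W) + ((D+Y)*Z - Z*Y) - D*X"
  shows "(1/2) * (ppm * T - pm * pp - pp * pm + T * ppm) - T * T = - (Tn1 * Tnm1)"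
proof -
  have "(1/2) * (ppm * T - pm * pp - pp * pm + T * ppm) - T * T = T * ppm - pm * pp - T * T"
    by (simp add: algebra_simps)
  also have "\<dots> = - (Tn1 * Tnm1)" unfolding assms(6) unfolding assms(1-5) by (simp add: algebra_simps)
  finally show ?thesis .
qed

lemma alg2: fixes c D P1 P2 Q1 Q2 T0 T1 pdm0 pdm1 Tn1 Tnm1m1 :: complex
  assumes "c \<noteq> 0" "T0 = D" "T1 = D - c*P1" "pdm0 = c*Q1 + Q2" "Tn1 = D - (c*P1 + P2)" "Tnm1m1 = D - Q1"
    "T0 * pdm1 = (D - c*P1)*(Q2 - c*P2) + c*P2*(Q1 - c*P1)"
  shows "(1/c) * (pdm0 * T1 - T0 * pdm1) - T0 * T1 + Tn1 * Tnm1m1 = 0"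
  unfolding right_diff_distrib[of "1/c"] assms(7) unfolding assms(2-6) using assms(1)
  by (simp add: field_simps)

lemma alg3: fixes c D P1 P2 R1 R2 T0 T1 dT1 T2 dT2 T3 :: complex
  assumes "T0 = D" "T1 = D - (c*P1 + P2)" "dT1 = -(c*R1 + R2)" "T2 = D - c*P1" "dT2 = P1 - c*R1"
    "T0 * T3 = (D - c*P1)*(D - P2 + c*R2) + c*P2*(c*R1 - P1)"
  shows "c * (dT1 * T2 - T1 * dT2) - T1 * T2 + T0 * T3 = 0"
  unfolding assms(6) unfolding assms(1-5) by (simp add: algebra_simps)


lemma e_bq: fixes q c B X :: complex assumes "q \<noteq> 0" "B = (1+c*q)*X"
  shows "B/q = c*X + X/q"
  using assms by (simp add: field_simps)

lemma PP_same_neg: "PP (\<lambda>i j. M i j + a i * (- v j)) v u = PP M v u"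
  using PP_same[of M a "-1" v u] by simp
lemma PP_same_negk: "PP (\<lambda>i j. M i j + a i * (- (k * v j))) v u = PP M v u"
  using PP_same[of M a "-k" v u] by simp

context
  fixes c :: complex and cc :: "'n::finite \<Rightarrow> 'n \<Rightarrow> complex"
    and p q xi0 eta0 :: "'n \<Rightarrow> complex"
  assumes c0: "c \<noteq> 0"
    and pq0: "\<And>i j. p i + q j \<noteq> 0"
    and q0: "\<And>j. q j \<noteq> 0"
    and p0: "\<And>i. p i \<noteq> 0"
    and cp0: "\<And>i. 1 - c * p i \<noteq> 0"
    and cq0: "\<And>j. 1 + c * q j \<noteq> 0"
begin

lemma tau_eq: "tau c cc p q xi0 eta0 n m xm xp = mdet (Mt c cc p q xi0 eta0 n m xm xp)"
proof -
  have "(\<chi> i j. cc i j + (1 / (p i + q j)) * (- p i / q j) powi n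
            * ((1 - c * p i) / (1 + c * q j)) powi m
            * exp ((p i * of_real xp + of_real xm / p i + xi0 i)
                 + (q j * of_real xp + of_real xm / q j + eta0 j)))
     = (\<chi> i j. Mt c cc p q xi0 eta0 n m xm xp i j)"
  proof (rule vec_eq_iff[THEN iffD2], intro allI, rule vec_eq_iff[THEN iffD2], intro allI)
    fix i j
    have a: "q j powi n \<noteq> 0" "(1 + c * q j) powi m \<noteq> 0" using q0 cq0 by auto
    have b: "(- (p i' / q j')) powi n = (- p i') powi n / q j' powi n" for i' j'
      by (subst power_int_divide_distrib[symmetric]) simp
    show "(\<chi> i j. cc i j + (1 / (p i + q j)) * (- p i / q j) powi n
            * ((1 - c * p i) / (1 + c * q j)) powi m
            * exp ((p i * of_real xp + of_real xm / p i + xi0 i)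
                 + (q j * of_real xp + of_real xm / q j + eta0 j))) $ i $ j
        = (\<chi> i j. Mt c cc p q xi0 eta0 n m xm xp i j) $ i $ j"
      using a pq0[of i j] by (simp add: b Mt_def phi_def psi_def power_int_divide_distrib exp_add field_simps)
  qed
  then show ?thesis unfolding tau_def mdet_def by simp
qed

lemma phi_dm: "((\<lambda>t. phi c p xi0 n m t xp i) has_vector_derivative phi c p xi0 n m xm xp i / p i) (at xm)"
proof -
  have e: "(\<lambda>t. phi c p xi0 n m t xp i) = (\<lambda>t. ((- p i) powi n * (1 - c * p i) powi m) *
     exp ((p i * of_real xp + xi0 i) + of_real t * (1 / p i)))"
    by (simp add: phi_def fun_eq_iff algebra_simps)
  show ?thesis unfolding e
    by (rule has_vector_derivative_eq_rhs, rule has_vector_derivative_mult_right, rule vd_exp)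
       (simp add: phi_def algebra_simps)
qed

lemma phi_dp: "((\<lambda>t. phi c p xi0 n m xm t i) has_vector_derivative p i * phi c p xi0 n m xm xp i) (at xp)"
proof -
  have e: "(\<lambda>t. phi c p xi0 n m xm t i) = (\<lambda>t. ((- p i) powi n * (1 - c * p i) powi m) *
     exp ((of_real xm / p i + xi0 i) + of_real t * p i))"
    by (simp add: phi_def fun_eq_iff algebra_simps)
  show ?thesis unfolding e
    by (rule has_vector_derivative_eq_rhs, rule has_vector_derivative_mult_right, rule vd_exp)
       (simp add: phi_def algebra_simps)
qed

lemma psi_dm: "((\<lambda>t. psi c q eta0 n m t xp j) has_vector_derivative psi c q eta0 n m xm xp j / q j) (at xm)"
proof -
  have e: "(\<lambda>t. psi c q eta0 n m t xp j) = (\<lambda>t. exp ((q j * of_real xp + eta0 j) + of_real t * (1 / q j))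
     / (q j powi n * (1 + c * q j) powi m))"
    by (simp add: psi_def fun_eq_iff algebra_simps)
  show ?thesis unfolding e
    by (rule has_vector_derivative_eq_rhs, rule has_vector_derivative_divide, rule vd_exp)
       (simp add: psi_def algebra_simps)
qed

lemma psi_dp: "((\<lambda>t. psi c q eta0 n m xm t j) has_vector_derivative q j * psi c q eta0 n m xm xp j) (at xp)"
proof -
  have e: "(\<lambda>t. psi c q eta0 n m xm t j) = (\<lambda>t. exp ((of_real xm / q j + eta0 j) + of_real t * q j)
     / (q j powi n * (1 + c * q j) powi m))"
    by (simp add: psi_def fun_eq_iff algebra_simps)
  show ?thesis unfolding e
    by (rule has_vector_derivative_eq_rhs, rule has_vector_derivative_divide, rule vd_exp)
       (simp add: psi_def algebra_simps)
qed

abbreviation "Ph \<equiv> phi c p xi0"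
abbreviation "Ps \<equiv> psi c q eta0"
abbreviation "MM \<equiv> Mt c cc p q xi0 eta0"
abbreviation "TT \<equiv> tau c cc p q xi0 eta0"

lemma M_dm: "((\<lambda>t. MM n m t xp i j) has_vector_derivative (Ph n m xm xp i / p i) * (Ps n m xm xp j / q j)) (at xm)"
  unfolding Mt_def
  by (rule has_vector_derivative_eq_rhs,
      rule has_vector_derivative_add[OF has_vector_derivative_const has_vector_derivative_divide[OF has_vector_derivative_mult[OF phi_dm psi_dm]]])
     (rule e_dm[OF pq0 p0 q0])

lemma M_dp: "((\<lambda>t. MM n m xm t i j) has_vector_derivative Ph n m xm xp i * Ps n m xm xp j) (at xp)"
  unfolding Mt_def
  by (rule has_vector_derivative_eq_rhs,
      rule has_vector_derivative_add[OF has_vector_derivative_const has_vector_derivative_divide[OF has_vector_derivative_mult[OF phi_dp psi_dp]]])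
     (rule aux_d[OF pq0])

lemma pdm_T: "pdm (TT n m) xm xp = PP (MM n m xm xp) (\<lambda>j. Ps n m xm xp j / q j) (\<lambda>i. Ph n m xm xp i / p i)"
proof -
  have "((\<lambda>t. mdet (MM n m t xp)) has_vector_derivative PP (MM n m xm xp) (\<lambda>j. Ps n m xm xp j / q j) (\<lambda>i. Ph n m xm xp i / p i)) (at xm)"
    by (rule mdet_deriv1) (rule M_dm)
  then show ?thesis unfolding pdm_def tau_eq by (rule vector_derivative_at)
qed

lemma pdp_T: "pdp (TT n m) xm xp = PP (MM n m xm xp) (Ps n m xm xp) (Ph n m xm xp)"
proof -
  have "((\<lambda>t. mdet (MM n m xm t)) has_vector_derivative PP (MM n m xm xp) (\<lambda>j. Ps n m xm xp j) (\<lambda>i. Ph n m xm xp i)) (at xp)"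
    by (rule mdet_deriv1) (rule M_dp)
  then show ?thesis unfolding pdp_def tau_eq by (rule vector_derivative_at)
qed

lemma pdp_pdm_T: "pdp (pdm (TT n m)) xm xp =
   PP (\<lambda>i j. MM n m xm xp i j + Ph n m xm xp i / p i * (Ps n m xm xp j / q j)) (Ps n m xm xp) (Ph n m xm xp)
 + PP (\<lambda>i j. MM n m xm xp i j + Ph n m xm xp i / p i * (Ps n m xm xp j / q j)) (\<lambda>j. Ps n m xm xp j / q j) (Ph n m xm xp)
 + PP (\<lambda>i j. MM n m xm xp i j + Ph n m xm xp i / p i * (Ps n m xm xp j / q j)) (Ps n m xm xp) (\<lambda>i. Ph n m xm xp i / p i)
 - PP (MM n m xm xp) (Ps n m xm xp) (Ph n m xm xp)"
proof -
  have e: "pdm (TT n m) = (\<lambda>xm xp. mdet (\<lambda>i j. MM n m xm xp i j + Ph n m xm xp i / p i * (Ps n m xm xp j / q j)) - mdet (MM n m xm xp))"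
    by ((rule ext)+, simp only: pdm_T RL, simp)
  have d1: "((\<lambda>t. mdet (\<lambda>i j. MM n m xm t i j + Ph n m xm t i / p i * (Ps n m xm t j / q j))) has_vector_derivative
     PP (\<lambda>i j. MM n m xm xp i j + Ph n m xm xp i / p i * (Ps n m xm xp j / q j)) (Ps n m xm xp) (Ph n m xm xp)
   + PP (\<lambda>i j. MM n m xm xp i j + Ph n m xm xp i / p i * (Ps n m xm xp j / q j)) (\<lambda>j. Ps n m xm xp j / q j) (Ph n m xm xp)
   + PP (\<lambda>i j. MM n m xm xp i j + Ph n m xm xp i / p i * (Ps n m xm xp j / q j)) (Ps n m xm xp) (\<lambda>i. Ph n m xm xp i / p i)) (at xp)"
  proof (rule mdet_deriv3)
    fix i j
    show "((\<lambda>t. MM n m xm t i j + Ph n m xm t i / p i * (Ps n m xm t j / q j)) has_vector_derivative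
        Ph n m xm xp i * Ps n m xm xp j + Ph n m xm xp i * (Ps n m xm xp j / q j) + Ph n m xm xp i / p i * Ps n m xm xp j) (at xp)"
      by (rule has_vector_derivative_eq_rhs,
          rule has_vector_derivative_add[OF M_dp has_vector_derivative_mult[OF has_vector_derivative_divide[OF phi_dp] has_vector_derivative_divide[OF psi_dp]]])
         (insert p0[of i] q0[of j], simp add: field_simps)
  qed
  have d2: "((\<lambda>t. mdet (MM n m xm t)) has_vector_derivative PP (MM n m xm xp) (Ps n m xm xp) (Ph n m xm xp)) (at xp)"
    by (rule mdet_deriv1) (rule M_dp)
  show ?thesis unfolding pdp_def e
    by (rule vector_derivative_at, rule has_vector_derivative_diff[OF d1 d2])
qed

lemma Ph_n1: "Ph (n+1) m xm xp i = - p i * Ph n m xm xp i"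
  using p0[of i] by (simp add: phi_def power_int_add_1)
lemma Ps_n1: "Ps (n+1) m xm xp j = Ps n m xm xp j / q j"
  using q0[of j] cq0[of j] by (simp add: psi_def power_int_add field_simps)
lemma Ph_m1: "Ph n (m+1) xm xp i = (1 - c * p i) * Ph n m xm xp i"
  using cp0[of i] by (simp add: phi_def power_int_add_1)
lemma Ps_m1: "Ps n (m+1) xm xp j = Ps n m xm xp j / (1 + c * q j)"
  using q0[of j] cq0[of j] by (simp add: psi_def power_int_add field_simps)
lemma Ph_nm1: "Ph (n-1) m xm xp i = - (Ph n m xm xp i / p i)"
  using Ph_n1[of "n-1" m xm xp i] p0[of i] by (simp add: field_simps)
lemma Ps_nm1: "Ps (n-1) m xm xp j = q j * Ps n m xm xp j"
  using Ps_n1[of "n-1" m xm xp j] q0[of j] by (simp add: field_simps)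

lemma Xq: "Ps n m xm xp j = q j * (Ps n m xm xp j / q j)"
  using q0[of j] by simp
lemma Xp: "Ph n m xm xp i = p i * (Ph n m xm xp i / p i)"
  using p0[of i] by simp
lemma Xe: "Ps n m xm xp j = (1 + c * q j) * (Ps n m xm xp j / (1 + c * q j))"
  using cq0[of j] by simp

lemma Ph_nm1m1: "Ph (n-1) (m+1) xm xp i = -((1-c*p i)*Ph n m xm xp i/p i)"
  by (subst Ph_nm1, subst Ph_m1, rule refl)
lemma Ps_nm1m1: "Ps (n-1) (m+1) xm xp j = q j * (Ps n m xm xp j / (1 + c*q j))"
  by (subst Ps_nm1, subst Ps_m1, rule refl)
lemma Ph_n1m1: "Ph (n+1) (m+1) xm xp i = - p i * ((1 - c*p i) * Ph n m xm xp i)"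
  by (subst Ph_n1, subst Ph_m1, rule refl)
lemma Ps_n1m1: "Ps (n+1) (m+1) xm xp j = (Ps n m xm xp j / (1 + c*q j)) / q j"
  by (subst Ps_n1, subst Ps_m1, rule refl)

lemma MM_n1: "MM (n+1) m xm xp = (\<lambda>i j. MM n m xm xp i j + Ph n m xm xp i * (- (Ps n m xm xp j / q j)))"
  unfolding Mt_def Ph_n1 Ps_n1 e_n1[OF pq0 Xq] by (simp add: algebra_simps)
lemma MM_nm1: "MM (n-1) m xm xp = (\<lambda>i j. MM n m xm xp i j + (- (Ph n m xm xp i / p i)) * Ps n m xm xp j)"
  unfolding Mt_def Ph_nm1 Ps_nm1 e_nm1[OF pq0 Xp] by (simp add: algebra_simps)
lemma MM_m1: "MM n (m+1) xm xp = (\<lambda>i j. MM n m xm xp i j + Ph n m xm xp i * (- (c * (Ps n m xm xp j / (1 + c * q j)))))"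
  unfolding Mt_def Ph_m1 Ps_m1 e_m1[OF pq0 Xe] by (simp add: algebra_simps)
lemma MM_nm1m1: "MM (n-1) (m+1) xm xp = (\<lambda>i j. MM n m xm xp i j + (- (Ph n m xm xp i / p i)) * (Ps n m xm xp j / (1 + c * q j)))"
  unfolding Mt_def Ph_nm1m1 Ps_nm1m1 e_nm1m1[OF pq0 p0 Xe] by (simp add: algebra_simps)
lemma MM_n1m1: "MM (n+1) (m+1) xm xp = (\<lambda>i j. MM n m xm xp i j
     + (- Ph n m xm xp i) * (c * (Ps n m xm xp j / (1 + c * q j)))
     + (- ((1 - c*p i) * Ph n m xm xp i)) * ((Ps n m xm xp j / (1 + c * q j)) / q j))"
  unfolding Mt_def Ph_n1m1 Ps_n1m1 e_n1m1[OF pq0 q0 Xe] by (simp add: algebra_simps)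

lemma eq1: "(1/2) * hirota_DmDp (TT n m) (TT n m) xm xp - TT n m xm xp * TT n m xm xp
   = - (TT (n+1) m xm xp * TT (n-1) m xm xp)"
proof -
  define M where "M = MM n m xm xp"
  define a where "a = Ph n m xm xp"
  define b where "b = Ps n m xm xp"
  define a' where "a' = (\<lambda>i. a i / p i)"
  define b' where "b' = (\<lambda>j. b j / q j)"
  define C where "C = (\<lambda>i j. M i j + a' i * b' j)"
  have T0: "TT n m xm xp = mdet M" unfolding M_def tau_eq ..
  have Tn1: "TT (n+1) m xm xp = mdet M - PP M b' a"
  proof -
    have "TT (n+1) m xm xp = mdet (\<lambda>i j. M i j + a i * (- b' j))"
      unfolding tau_eq MM_n1 M_def a_def b'_def b_def ..
    also have "\<dots> = mdet M - PP M b' a" unfolding RL PP_negv by simp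
    finally show ?thesis .
  qed
  have Tnm1: "TT (n-1) m xm xp = mdet M - PP M b a'"
  proof -
    have "TT (n-1) m xm xp = mdet (\<lambda>i j. M i j + (- a' i) * b j)"
      unfolding tau_eq MM_nm1 M_def a'_def a_def b_def ..
    also have "\<dots> = mdet M - PP M b a'" unfolding RL PP_negu by simp
    finally show ?thesis .
  qed
  have pm: "pdm (TT n m) xm xp = PP M b' a'"
    unfolding pdm_T M_def a'_def b'_def a_def b_def ..
  have pp: "pdp (TT n m) xm xp = PP M b a"
    unfolding pdp_T M_def a_def b_def ..
  have ppm: "pdp (pdm (TT n m)) xm xp = PP C b a + PP C b' a + PP C b a' - PP M b a"
    unfolding pdp_pdm_T C_def M_def a'_def b'_def a_def b_def ..
  have h: "mdet M * PP C v u = (mdet M + PP M b' a') * PP M v u - PP M v a' * PP M b' u" for v u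
    unfolding C_def by (rule JPP)
  show ?thesis unfolding hirota_DmDp_def
  proof (rule alg1[OF T0 pm pp Tn1 Tnm1])
    show "TT n m xm xp * pdp (pdm (TT n m)) xm xp =
      (mdet M + PP M b' a') * PP M b a - PP M b a' * PP M b' a +
      ((mdet M + PP M b' a') * PP M b' a - PP M b' a' * PP M b' a) +
      ((mdet M + PP M b' a') * PP M b a' - PP M b a' * PP M b' a') - mdet M * PP M b a"
      unfolding T0 ppm by (simp only: h distrib_left right_diff_distrib)
  qed
qed



lemma eq2: "(1/c) * hirota_Dm (TT n m) (TT n (m+1)) xm xp - TT n m xm xp * TT n (m+1) xm xp
   + TT (n+1) m xm xp * TT (n-1) (m+1) xm xp = 0"
proof -
  define M where "M = MM n m xm xp"
  define a where "a = Ph n m xm xp"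
  define b where "b = Ps n m xm xp"
  define a' where "a' = (\<lambda>i. a i / p i)"
  define w1 where "w1 = (\<lambda>j. b j / (1 + c * q j))"
  define w2 where "w2 = (\<lambda>j. w1 j / q j)"
  have bq: "(\<lambda>j. b j / q j) = (\<lambda>j. c * w1 j + w2 j)"
  proof (rule ext)
    fix j
    have "b j = (1 + c * q j) * (b j / (1 + c * q j))" using cq0[of j] by simp
    then show "b j / q j = c * w1 j + w2 j" unfolding w1_def w2_def by (rule e_bq[OF q0])
  qed
  have T0: "TT n m xm xp = mdet M" unfolding M_def tau_eq ..
  have T1: "TT n (m+1) xm xp = mdet M - c * PP M w1 a"
  proof -
    have "TT n (m+1) xm xp = mdet (\<lambda>i j. M i j + a i * (- (c * w1 j)))"
      unfolding tau_eq MM_m1 M_def a_def w1_def b_def ..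
    also have "\<dots> = mdet M - c * PP M w1 a" unfolding RL PP_negv PP_mulv by simp
    finally show ?thesis .
  qed
  have pdm0: "pdm (TT n m) xm xp = c * PP M w1 a' + PP M w2 a'"
  proof -
    have "pdm (TT n m) xm xp = PP M (\<lambda>j. b j / q j) a'"
      unfolding pdm_T M_def a'_def a_def b_def ..
    then show ?thesis unfolding bq PP_addv PP_mulv .
  qed
  have Tn1: "TT (n+1) m xm xp = mdet M - (c * PP M w1 a + PP M w2 a)"
  proof -
    have "TT (n+1) m xm xp = mdet (\<lambda>i j. M i j + a i * (- (b j / q j)))"
      unfolding tau_eq MM_n1 M_def a_def b_def ..
    also have "\<dots> = mdet M - (c * PP M w1 a + PP M w2 a)"
      unfolding RL PP_negv bq PP_addv PP_mulv by simp
    finally show ?thesis .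
  qed
  have Tnm1m1: "TT (n-1) (m+1) xm xp = mdet M - PP M w1 a'"
  proof -
    have "TT (n-1) (m+1) xm xp = mdet (\<lambda>i j. M i j + (- a' i) * w1 j)"
      unfolding tau_eq MM_nm1m1 M_def a'_def a_def w1_def b_def ..
    also have "\<dots> = mdet M - PP M w1 a'" unfolding RL PP_negu by simp
    finally show ?thesis .
  qed
  have Jf: "TT n m xm xp * pdm (TT n (m+1)) xm xp
     = (mdet M - c * PP M w1 a) * (PP M w2 a' - c * PP M w2 a) + c * PP M w2 a * (PP M w1 a' - c * PP M w1 a)"
  proof -
    have u: "(\<lambda>i. (1 - c * p i) * a i / p i) = (\<lambda>i. a' i + (- c) * a i)"
      unfolding a'_def using p0 by (auto simp: fun_eq_iff field_simps)
    have "pdm (TT n (m+1)) xm xp = PP (\<lambda>i j. M i j + a i * (- (c * w1 j))) w2 (\<lambda>i. (1 - c * p i) * a i / p i)"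
      unfolding pdm_T MM_m1 Ps_m1 Ph_m1 M_def a_def w2_def w1_def b_def ..
    then have "TT n m xm xp * pdm (TT n (m+1)) xm xp
        = mdet M * PP (\<lambda>i j. M i j + a i * (- (c * w1 j))) w2 (\<lambda>i. a' i + (- c) * a i)"
      unfolding T0 u by simp
    also have "\<dots> = (mdet M + PP M (\<lambda>j. - (c * w1 j)) a) * PP M w2 (\<lambda>i. a' i + (- c) * a i)
        - PP M w2 a * PP M (\<lambda>j. - (c * w1 j)) (\<lambda>i. a' i + (- c) * a i)"
      by (rule JPP)
    also have "\<dots> = (mdet M - c * PP M w1 a) * (PP M w2 a' - c * PP M w2 a) + c * PP M w2 a * (PP M w1 a' - c * PP M w1 a)"
      unfolding PP_negv PP_mulv PP_addu PP_mulu by (simp add: algebra_simps)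
    finally show ?thesis .
  qed
  show ?thesis unfolding hirota_Dm_def
    by (rule alg2[OF c0 T0 T1 pdm0 Tn1 Tnm1m1 Jf])
qed

lemma eq3: "c * hirota_Dp (TT (n+1) m) (TT n (m+1)) xm xp - TT (n+1) m xm xp * TT n (m+1) xm xp
   + TT n m xm xp * TT (n+1) (m+1) xm xp = 0"
proof -
  define M where "M = MM n m xm xp"
  define a where "a = Ph n m xm xp"
  define b where "b = Ps n m xm xp"
  define ah where "ah = (\<lambda>i. p i * a i)"
  define w1 where "w1 = (\<lambda>j. b j / (1 + c * q j))"
  define w2 where "w2 = (\<lambda>j. w1 j / q j)"
  have bq: "(\<lambda>j. b j / q j) = (\<lambda>j. c * w1 j + w2 j)"
  proof (rule ext)
    fix j
    have "b j = (1 + c * q j) * (b j / (1 + c * q j))" using cq0[of j] by simp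
    then show "b j / q j = c * w1 j + w2 j" unfolding w1_def w2_def by (rule e_bq[OF q0])
  qed
  have T0: "TT n m xm xp = mdet M" unfolding M_def tau_eq ..
  have T2: "TT n (m+1) xm xp = mdet M - c * PP M w1 a"
  proof -
    have "TT n (m+1) xm xp = mdet (\<lambda>i j. M i j + a i * (- (c * w1 j)))"
      unfolding tau_eq MM_m1 M_def a_def w1_def b_def ..
    also have "\<dots> = mdet M - c * PP M w1 a" unfolding RL PP_negv PP_mulv by simp
    finally show ?thesis .
  qed
  have T1: "TT (n+1) m xm xp = mdet M - (c * PP M w1 a + PP M w2 a)"
  proof -
    have "TT (n+1) m xm xp = mdet (\<lambda>i j. M i j + a i * (- (b j / q j)))"
      unfolding tau_eq MM_n1 M_def a_def b_def ..
    also have "\<dots> = mdet M - (c * PP M w1 a + PP M w2 a)"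
      unfolding RL PP_negv bq PP_addv PP_mulv by simp
    finally show ?thesis .
  qed
  have dT1: "pdp (TT (n+1) m) xm xp = - (c * PP M w1 ah + PP M w2 ah)"
  proof -
    have e1: "Ps (n+1) m xm xp = (\<lambda>j. b j / q j)" unfolding b_def by (rule ext) (rule Ps_n1)
    have e2: "Ph (n+1) m xm xp = (\<lambda>i. - ah i)" unfolding ah_def a_def by (rule ext) (simp add: Ph_n1)
    have "pdp (TT (n+1) m) xm xp = PP (\<lambda>i j. M i j + a i * (- (b j / q j))) (\<lambda>j. b j / q j) (\<lambda>i. - ah i)"
      unfolding pdp_T e1 e2 unfolding MM_n1 M_def a_def b_def ..
    also have "\<dots> = - (c * PP M w1 ah + PP M w2 ah)"
      by (subst PP_same_neg, unfold PP_negu bq PP_addv PP_mulv, rule refl)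
    finally show ?thesis .
  qed
  have dT2: "pdp (TT n (m+1)) xm xp = PP M w1 a - c * PP M w1 ah"
  proof -
    have e1: "Ps n (m+1) xm xp = w1" unfolding w1_def b_def by (rule ext) (rule Ps_m1)
    have e2: "Ph n (m+1) xm xp = (\<lambda>i. a i + (- c) * ah i)" unfolding ah_def a_def
      by (rule ext) (subst Ph_m1, simp add: algebra_simps)
    have "pdp (TT n (m+1)) xm xp = PP (\<lambda>i j. M i j + a i * (- (c * w1 j))) w1 (\<lambda>i. a i + (- c) * ah i)"
      unfolding pdp_T e1 e2 unfolding MM_m1 M_def a_def w1_def b_def ..
    also have "\<dots> = PP M w1 a - c * PP M w1 ah"
      unfolding PP_same_negk PP_addu PP_mulu by simp
    finally show ?thesis .
  qed
  have T3: "TT n m xm xp * TT (n+1) (m+1) xm xp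
     = (mdet M - c * PP M w1 a) * (mdet M - PP M w2 a + c * PP M w2 ah) + c * PP M w2 a * (c * PP M w1 ah - PP M w1 a)"
  proof -
    have u: "(\<lambda>i. - ((1 - c * p i) * a i)) = (\<lambda>i. - (a i + (- c) * ah i))"
      unfolding ah_def by (auto simp: fun_eq_iff algebra_simps)
    have "TT n m xm xp * TT (n+1) (m+1) xm xp
        = mdet M * mdet (\<lambda>i j. M i j + (- a i) * (c * w1 j) + (- ((1 - c * p i) * a i)) * w2 j)"
      unfolding T0 unfolding tau_eq MM_n1m1 M_def a_def w2_def w1_def b_def ..
    also have "\<dots> = (mdet M + PP M (\<lambda>j. c * w1 j) (\<lambda>i. - a i)) * (mdet M + PP M w2 (\<lambda>i. - ((1 - c * p i) * a i)))
        - PP M w2 (\<lambda>i. - a i) * PP M (\<lambda>j. c * w1 j) (\<lambda>i. - ((1 - c * p i) * a i))"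
      by (rule J)
    also have "\<dots> = (mdet M - c * PP M w1 a) * (mdet M - PP M w2 a + c * PP M w2 ah) + c * PP M w2 a * (c * PP M w1 ah - PP M w1 a)"
      unfolding u PP_negu PP_mulv PP_addu PP_mulu by (simp add: algebra_simps)
    finally show ?thesis .
  qed
  show ?thesis unfolding hirota_Dp_def
    by (rule alg3[OF T0 T1 dT1 T2 dT2 T3])
qed

end

theorem lemma2:
  fixes c :: complex and cc :: "'n::finite \<Rightarrow> 'n \<Rightarrow> complex"
    and p q xi0 eta0 :: "'n \<Rightarrow> complex"
  assumes "c \<noteq> 0"
    and "\<And>i j. p i + q j \<noteq> 0"
    and "\<And>j. q j \<noteq> 0"
    and "\<And>i. p i \<noteq> 0"
    and "\<And>i. 1 - c * p i \<noteq> 0"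
    and "\<And>j. 1 + c * q j \<noteq> 0"
  shows "\<forall>(n::int) (m::int) xm xp.
    (let T = tau c cc p q xi0 eta0 in
      (1/2) * hirota_DmDp (T n m) (T n m) xm xp - T n m xm xp * T n m xm xp
        = - (T (n+1) m xm xp * T (n-1) m xm xp)
    \<and> (1/c) * hirota_Dm (T n m) (T n (m+1)) xm xp - T n m xm xp * T n (m+1) xm xp
        + T (n+1) m xm xp * T (n-1) (m+1) xm xp = 0
    \<and> c * hirota_Dp (T (n+1) m) (T n (m+1)) xm xp - T (n+1) m xm xp * T n (m+1) xm xp
        + T n m xm xp * T (n+1) (m+1) xm xp = 0)"
proof (intro allI)
  fix n m :: int and xm xp :: real
  note e1 = eq1[where c=c and p=p and q=q, OF assms]
  note e2 = eq2[where c=c and p=p and q=q, OF assms]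
  note e3 = eq3[where c=c and p=p and q=q, OF assms]
  show "let T = tau c cc p q xi0 eta0 in
      (1/2) * hirota_DmDp (T n m) (T n m) xm xp - T n m xm xp * T n m xm xp
        = - (T (n+1) m xm xp * T (n-1) m xm xp)
    \<and> (1/c) * hirota_Dm (T n m) (T n (m+1)) xm xp - T n m xm xp * T n (m+1) xm xp
        + T (n+1) m xm xp * T (n-1) (m+1) xm xp = 0
    \<and> c * hirota_Dp (T (n+1) m) (T n (m+1)) xm xp - T (n+1) m xm xp * T n (m+1) xm xp
        + T n m xm xp * T (n+1) (m+1) xm xp = 0"
    unfolding Let_def using e1[where cc=cc and n=n and m=m and xm=xm and xp=xp] e2[where cc=cc and n=n and m=m and xm=xm and xp=xp] e3[where cc=cc and n=n and m=m and xm=xm and xp=xp] by blast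
qed

end
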